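(* Let $A_{\mathrm{app}},B_{\mathrm{app}}\in K[X]$ with $n=\deg A_{\mathrm{app}}\ge d=\deg B_{\mathrm{app}}\ge1$, and assume that $B_{\mathrm{app}}$ has a nonzero coefficient in degree $<d$. Let $\varphi_A$ (on $[0,n]$) and $\varphi_B$ (on $[0,d]$) be Newton functions such that the precisions $O(\varphi_A)$ on $A_{\mathrm{app}}$ and $O(\varphi_B)$ on $B_{\mathrm{app}}$ are nondegenerate. Set $$\varphi=\varphi_A\,\overline{+}\,\big[\varphi_B\,\overline{\times}\,(\mathrm{NF}(A_{\mathrm{app}})\,\overline{\div}\,\mathrm{NF}(B_{\mathrm{app}}))\big],$$ and let $Q_{\mathrm{app}}=A_{\mathrm{app}}\,\mathrm{div}\,B_{\mathrm{app}}$ and $R_{\mathrm{app}}=A_{\mathrm{app}}\bmod B_{\mathrm{app}}$. Then for all $\delta A\in K_{\le n}[X]$ and $\delta B\in K_{\le d}[X]$ with $\mathrm{NF}(\delta A)\ge\varphi_A$ and $\mathrm{NF}(\delta B)\ge\varphi_B$, the polynomials $$Q=(A_{\mathrm{app}}+\delta A)\,\mathrm{div}\,(B_{\mathrm{app}}+\delta B),\qquad R=(A_{\mathrm{app}}+\delta A)\bmod(B_{\mathrm{app}}+\delta B)$$ satisfy $$\mathrm{NF}(Q-Q_{\mathrm{app}})\ge \varphi\,\overline{\div}\,\mathrm{NF}(B_{\mathrm{app}}),\qquad \mathrm{NF}(R-R_{\mathrm{app}})\ge\varphi\,\overline{\bmod}\,\mathrm{NF}(B_{\mathrm{app}}).$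$
   Context: $K$ is a complete discrete valuation field with valuation $\mathrm{val}:K\to\mathbb Z\cup\{+\infty\}$, normalized to be surjective, with $\mathrm{val}(0)=+\infty$. $K_{\le n}[X]$ denotes the polynomials of degree at most $n$. For $Q=\sum q_iX^i\in K[X]$ nonzero of degree $m$, its Newton function $\mathrm{NF}(Q):[0,m]\to\mathbb R\cup\{+\infty\}$ is the greatest convex function with $\mathrm{NF}(Q)(i)\le \mathrm{val}(q_i)$ for all integers $0\le i\le m$. Its epigraph is the Newton polygon $\mathrm{NP}(Q)$; an extremal point of $\mathrm{NP}(Q)$ is a vertex of this epigraph. For a convex function $g$ on $[0,M]$ and a polynomial $Q$ of degree $\le M$, "$\mathrm{NF}(Q)\ge g$" means $\mathrm{val}(q_i)\ge g(i)$ for all integers $0\le i\le M$. A Newton function of degree $n$ is a convex, piecewise affine function $[0,n]\to\mathbb R\cup\{+\infty\}$, finite at $n$, whose epigraph has extremal points with integral abscissae. Given $P_{\mathrm{app}}$ of degree $n$ and a Newton function $\varphi_P$ of degree $n$, the precision $O(\varphi_P)$ on $P_{\mathrm{app}}$ is nondegenerate if $\varphi_P\ge\mathrm{NF}(P_{\mathrm{app}})$ and $\varphi_P(x)>y$ for every extremal point $(x,y)$ of $\mathrm{NP}(P_{\mathrm{app}})$. $A\,\mathrm{div}\,B$ and $A\bmod B$ are the quotient and remainder of Euclidean division: $A=(A\,\mathrm{div}\,B)B+(A\bmod B)$ with $\deg(A\bmod B)<\deg B$. Operations on convex functions: - $\varphi\,\overline{+}\,\psi$ is the greatest convex function below both $\varphi$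 and $\psi$; its epigraph is the convex hull of the union of the epigraphs. - $\varphi\,\overline{\times}\,\psi$, for $\varphi$ on $[0,n]$ and $\psi$ on $[0,m]$, is the function on $[0,n+m]$ given by $(\varphi\,\overline{\times}\,\psi)(x)=\inf_{y+z=x}\varphi(y)+\psi(z)$. Euclidean division of Newton functions: let $\varphi$ be convex on $[0,n]$, finite at $n$, and $\psi$ convex on $[0,d]$ with $1\le d\le n$ and $\psi(d-1),\psi(d)$ finite. Set $\lambda=\psi(d)-\psi(d-1)$. Let $\Delta$ be the greatest affine function of slope $\lambda$ with $\Delta\le\varphi$ on $[d,n]$, and set $\delta=\Delta(d)-\psi(d)$. Define - $\varphi\,\overline{\bmod}\,\psi=\varphi|_{[0,d-1]}\,\overline{+}\,(\psi|_{[0,d-1]}+\delta)$ on $[0,d-1]$; - $(\varphi\,\overline{\div}\,\psi)(x)=\inf_{h\ge0,\ x+d+h\le n}\big(\varphi(x+d+h)-\lambda h\big)-\psi(d)$ for $x\in[0,n-d]$. *)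

theory Defs
  imports "HOL-Analysis.Analysis" "HOL-Computational_Algebra.Polynomial"
begin

definition discrete_valuation :: "('a::field \<Rightarrow> ereal) \<Rightarrow> bool" where
  "discrete_valuation val \<longleftrightarrow>
     (\<forall>x. val x = \<infinity> \<longleftrightarrow> x = 0) \<and>
     (\<forall>x y. val (x * y) = val x + val y) \<and>
     (\<forall>x y. min (val x) (val y) \<le> val (x + y)) \<and>
     range val = insert \<infinity> (range (\<lambda>k::int. ereal (of_int k)))"

definition complete_dvf :: "('a::field \<Rightarrow> ereal) \<Rightarrow> bool" where
  "complete_dvf val \<longleftrightarrow> discrete_valuation val \<and>
     (\<forall>s::nat \<Rightarrow> 'a.
        (\<forall>N::int. \<exists>M. \<forall>i\<ge>M. \<forall>j\<ge>M. ereal (of_int N) \<le> val (s i - s j)) \<longrightarrow>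
        (\<exists>L. \<forall>N::int. \<exists>M. \<forall>i\<ge>M. ereal (of_int N) \<le> val (s i - L)))"

definition conv_fun :: "real \<Rightarrow> (real \<Rightarrow> ereal) \<Rightarrow> bool" where
  "conv_fun N g \<longleftrightarrow> (\<forall>x\<in>{0..N}. g x \<noteq> -\<infinity>) \<and>
     (\<forall>x\<in>{0..N}. \<forall>y\<in>{0..N}. \<forall>t\<in>{0..1}.
        g ((1 - t) * x + t * y) \<le> ereal (1 - t) * g x + ereal t * g y)"

definition newton_fun :: "('a::zero \<Rightarrow> ereal) \<Rightarrow> 'a poly \<Rightarrow> real \<Rightarrow> ereal" where
  "newton_fun val Q x =
     (SUP g \<in> {g. conv_fun (real (degree Q)) g \<and>
                  (\<forall>i\<le>degree Q. g (real i) \<le> val (coeff Q i))}. g x)"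

text \<open>"NF(Q) >= g" for g on [0,M]: val(q_i) >= g(i) for all integers 0 <= i <= M.\<close>
definition coeffs_ge :: "('a::zero \<Rightarrow> ereal) \<Rightarrow> nat \<Rightarrow> 'a poly \<Rightarrow> (real \<Rightarrow> ereal) \<Rightarrow> bool" where
  "coeffs_ge val M Q g \<longleftrightarrow> (\<forall>i\<le>M. g (real i) \<le> val (coeff Q i))"

definition epi :: "real \<Rightarrow> (real \<Rightarrow> ereal) \<Rightarrow> (real \<times> real) set" where
  "epi N f = {(x, y). x \<in> {0..N} \<and> f x \<le> ereal y}"

definition newton_polygon :: "('a::zero \<Rightarrow> ereal) \<Rightarrow> 'a poly \<Rightarrow> (real \<times> real) set" where
  "newton_polygon val Q = epi (real (degree Q)) (newton_fun val Q)"

definition newton_function :: "nat \<Rightarrow> (real \<Rightarrow> ereal) \<Rightarrow> bool" where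
  "newton_function n f \<longleftrightarrow>
     conv_fun (real n) f \<and> f (real n) \<noteq> \<infinity> \<and>
     (\<exists>a\<in>{0..real n}. \<exists>L::(real \<times> real) set. finite L \<and> L \<noteq> {} \<and>
        (\<forall>x\<in>{0..real n}. (x < a \<longrightarrow> f x = \<infinity>) \<and>
           (a \<le> x \<longrightarrow> f x = ereal (Max ((\<lambda>(\<alpha>, \<beta>). \<alpha> * x + \<beta>) ` L))))) \<and>
     (\<forall>p. p extreme_point_of (epi (real n) f) \<longrightarrow> fst p \<in> \<int>)"

definition nondegenerate :: "('a::zero \<Rightarrow> ereal) \<Rightarrow> 'a poly \<Rightarrow> (real \<Rightarrow> ereal) \<Rightarrow> bool" where
  "nondegenerate val P \<phi> \<longleftrightarrow>
     (\<forall>x\<in>{0..real (degree P)}. newton_fun val P x \<le> \<phi> x) \<and>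
     (\<forall>p. p extreme_point_of (newton_polygon val P) \<longrightarrow> ereal (snd p) < \<phi> (fst p))"

definition conv_plus :: "real \<Rightarrow> (real \<Rightarrow> ereal) \<Rightarrow> (real \<Rightarrow> ereal) \<Rightarrow> real \<Rightarrow> ereal" where
  "conv_plus N f g x =
     (SUP h \<in> {h. conv_fun N h \<and> (\<forall>y\<in>{0..N}. h y \<le> f y \<and> h y \<le> g y)}. h x)"

definition conv_times :: "real \<Rightarrow> real \<Rightarrow> (real \<Rightarrow> ereal) \<Rightarrow> (real \<Rightarrow> ereal) \<Rightarrow> real \<Rightarrow> ereal" where
  "conv_times n m f g x =
     (INF yz \<in> {(y, z). y \<in> {0..n} \<and> z \<in> {0..m} \<and> y + z = x}. f (fst yz) + g (snd yz))"

definition nf_slope :: "real \<Rightarrow> (real \<Rightarrow> ereal) \<Rightarrow> ereal" where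
  "nf_slope d \<psi> = \<psi> d - \<psi> (d - 1)"

text \<open>delta = Delta(d) - psi(d), Delta the greatest affine function of slope lambda
  below phi on [d,n], written Delta(x) = c + lambda (x - d).\<close>
definition nf_delta :: "real \<Rightarrow> real \<Rightarrow> (real \<Rightarrow> ereal) \<Rightarrow> (real \<Rightarrow> ereal) \<Rightarrow> ereal" where
  "nf_delta n d \<phi> \<psi> =
     ereal (Sup {c::real. \<forall>x\<in>{d..n}. ereal c + nf_slope d \<psi> * ereal (x - d) \<le> \<phi> x}) - \<psi> d"

definition nf_mod :: "real \<Rightarrow> real \<Rightarrow> (real \<Rightarrow> ereal) \<Rightarrow> (real \<Rightarrow> ereal) \<Rightarrow> real \<Rightarrow> ereal" where
  "nf_mod n d \<phi> \<psi> = conv_plus (d - 1) \<phi> (\<lambda>x. \<psi> x + nf_delta n d \<phi> \<psi>)"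

definition nf_div :: "real \<Rightarrow> real \<Rightarrow> (real \<Rightarrow> ereal) \<Rightarrow> (real \<Rightarrow> ereal) \<Rightarrow> real \<Rightarrow> ereal" where
  "nf_div n d \<phi> \<psi> x =
     (INF h \<in> {h::real. 0 \<le> h \<and> x + d + h \<le> n}. \<phi> (x + d + h) - nf_slope d \<psi> * ereal h) - \<psi> d"

end

theory Submission
  imports Defs
begin


context fixes val :: "'a::field \<Rightarrow> ereal" assumes dv: "discrete_valuation val"
begin

lemma dv_zero[simp]: "val 0 = \<infinity>" using dv unfolding discrete_valuation_def by blast
lemma dv_inf_iff: "val x = \<infinity> \<longleftrightarrow> x = 0" using dv unfolding discrete_valuation_def by blast
lemma dv_mult: "val (x * y) = val x + val y" using dv unfolding discrete_valuation_def by blast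
lemma dv_add: "min (val x) (val y) \<le> val (x + y)" using dv unfolding discrete_valuation_def by blast
lemma dv_not_minf: "val x \<noteq> -\<infinity>"
proof -
  have "val x \<in> range val" by simp
  hence "val x \<in> insert \<infinity> (range (\<lambda>k::int. ereal (of_int k)))" using dv unfolding discrete_valuation_def by simp
  thus ?thesis by auto
qed
lemma dv_fin: "x \<noteq> 0 \<Longrightarrow> \<exists>r. val x = ereal r"
  using dv_not_minf[of x] dv_inf_iff[of x] by (cases "val x") auto

lemma dv_one: "val 1 = 0"
proof -
  have "val 1 = val 1 + val 1" using dv_mult[of 1 1] by simp
  moreover obtain r where "val 1 = ereal r" using dv_fin[of 1] by auto
  ultimately show ?thesis by (simp add: zero_ereal_def)
qed

lemma dv_uminus[simp]: "val (- x) = val x"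
proof -
  have "val 1 = val (-1) + val (-1)" using dv_mult[of "-1" "-1"] by simp
  moreover obtain r where r: "val (-1) = ereal r" using dv_fin[of "-1"] by auto
  ultimately have "val (-1) = 0" using dv_one by (simp add: zero_ereal_def)
  thus ?thesis using dv_mult[of "-1" x] by simp
qed

lemma dv_diff: "min (val x) (val y) \<le> val (x - y)"
  using dv_add[of x "-y"] by simp

lemma dv_diff_ge: "c \<le> val x \<Longrightarrow> c \<le> val y \<Longrightarrow> c \<le> val (x - y)"
  using dv_diff[of x y] by (meson min.bounded_iff order_trans)

lemma dv_add_ge: "c \<le> val x \<Longrightarrow> c \<le> val y \<Longrightarrow> c \<le> val (x + y)"
  using dv_add[of x y] by (meson min.bounded_iff order_trans)

lemma dv_sum_ge: "(\<And>i. i \<in> I \<Longrightarrow> c \<le> val (f i)) \<Longrightarrow> c \<le> val (sum f I)"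
proof (induction I rule: infinite_finite_induct)
  case (insert x F) thus ?case by (simp add: dv_add_ge)
qed auto

lemma dv_strict: assumes "val x < val y" shows "val (x + y) = val x"
proof -
  have "min (val (x + y)) (val y) \<le> val x" using dv_diff[of "x+y" y] by simp
  hence "val (x + y) \<le> val x" using assms by (metis leD min_le_iff_disj)
  moreover have "val x \<le> val (x + y)" using dv_add[of x y] assms by simp
  ultimately show ?thesis by simp
qed

lemma dv_divide: assumes "y \<noteq> 0" shows "val (x / y) = val x - val y"
proof -
  have "val x = val (x / y) + val y" using dv_mult[of "x/y" y] assms by simp
  moreover obtain r where "val y = ereal r" using dv_fin assms by auto
  ultimately show ?thesis by (cases "val (x/y)") auto
qed

end


lemma Fmono:
  fixes F :: "nat \<Rightarrow> ereal"
  assumes Fs: "\<And>k. F k + ereal lam \<le> F (Suc k)" and "k \<le> m"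
  shows "F k + ereal (lam * (real m - real k)) \<le> F m"
  using assms(2)
proof (induction m)
  case 0 thus ?case by (simp add: zero_ereal_def)
next
  case (Suc m)
  show ?case
  proof (cases "k = Suc m")
    case True thus ?thesis by (simp add: zero_ereal_def)
  next
    case False
    hence km: "k \<le> m" using Suc by simp
    have "F k + ereal (lam * (real (Suc m) - real k)) = (F k + ereal (lam * (real m - real k))) + ereal lam"
      by (cases "F k") (auto simp: algebra_simps)
    also have "\<dots> \<le> F m + ereal lam" using Suc.IH[OF km] by (simp add: add_right_mono)
    also have "\<dots> \<le> F (Suc m)" using Fs by simp
    finally show ?thesis .
  qed
qed

context fixes val :: "'a::field \<Rightarrow> ereal" assumes dv: "discrete_valuation val"
begin

lemma div_bound:
  fixes B P :: "'a poly" and F :: "nat \<Rightarrow> ereal" and lam :: real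
  assumes B0: "B \<noteq> 0"
  and slopeB: "\<And>i. i \<le> degree B \<Longrightarrow> val (lead_coeff B) + ereal (lam * (real i - real (degree B))) \<le> val (coeff B i)"
  and Fs: "\<And>k. F k + ereal lam \<le> F (Suc k)"
  and FP: "\<And>k. F k \<le> val (coeff P k)"
  shows "F (j + degree B) - val (lead_coeff B) \<le> val (coeff (P div B) j)"
  using FP
proof (induction "degree P" arbitrary: P j rule: less_induct)
  case less
  define d where "d = degree B"
  define b where "b = lead_coeff B"
  have b0: "b \<noteq> 0" using B0 by (simp add: b_def)
  obtain vb where vb: "val b = ereal vb" using dv_fin[OF dv] b0 by auto
  show ?case
  proof (cases "P = 0 \<or> degree P < d")
    case True thus ?thesis using div_poly_less[of P B] dv_zero[OF dv] by (auto simp: d_def)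
  next
    case False
    hence P0: "P \<noteq> 0" and md: "d \<le> degree P" by auto
    define m where "m = degree P"
    define c where "c = lead_coeff P / b"
    define P' where "P' = P - monom c (m - d) * B"
    obtain vp where vp: "val (lead_coeff P) = ereal vp" using dv_fin[OF dv, of "lead_coeff P"] P0 by auto
    have vc: "val c = ereal (vp - vb)" unfolding c_def using dv_divide[OF dv b0] vp vb by simp
    have eq: "P div B = monom c (m - d) + P' div B"
    proof -
      have "P = P' + monom c (m - d) * B" by (simp add: P'_def)
      hence "P div B = (P' + monom c (m - d) * B) div B" by simp
      also have "\<dots> = monom c (m - d) + P' div B" using B0 by (simp add: div_mult_self1)
      finally show ?thesis .
    qed
    have FP': "F k \<le> val (coeff P' k)" for k
    proof -
      have c1: "F k \<le> val (coeff P k)" by (rule less.prems)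
      have c2: "F k \<le> val (if k < m - d then 0 else c * coeff B (k - (m - d)))"
      proof (cases "k < m - d")
        case True thus ?thesis using dv_zero[OF dv] by simp
      next
        case False
        define i where "i = k - (m - d)"
        show ?thesis
        proof (cases "i \<le> d")
          case False
          hence "coeff B i = 0" by (simp add: coeff_eq_0 d_def)
          thus ?thesis using \<open>\<not> k < m - d\<close> dv_zero[OF dv] by (simp add: i_def)
        next
          case True
          have km: "k \<le> m" using True \<open>\<not> k < m - d\<close> md m_def i_def by linarith
          have rr: "real m - real k = real d - real i" using True \<open>\<not> k < m - d\<close> md m_def i_def by auto
          have Fk: "F k + ereal (lam * (real m - real k)) \<le> ereal vp"
            using Fmono[of F lam, OF Fs km] less.prems[of m] vp by (simp add: m_def)
          have sb: "ereal vb + ereal (lam * (real i - real d)) \<le> val (coeff B i)"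
            using slopeB[of i] True vb by (simp add: d_def b_def)
          have "F k \<le> val (c * coeff B i)"
          proof (cases "val (coeff B i)")
            case (real bi)
            have "F k \<le> ereal (vp - lam * (real m - real k))"
              using Fk by (cases "F k") auto
            also have "\<dots> \<le> ereal (vp - vb + bi)"
            proof -
              have kk: "real k = real i + real m - real d" using rr by linarith
              have "lam * real k = lam * (real i + real m - real d)" by (simp only: kk)
              also have "\<dots> = lam * real i + lam * real m - lam * real d" by (simp add: algebra_simps)
              finally have "lam * real k = lam * real i + lam * real m - lam * real d" .
              thus ?thesis using sb real by (simp add: algebra_simps)
            qed
            also have "\<dots> = val (c * coeff B i)" using dv_mult[OF dv] vc real by simp
            finally show ?thesis .
          next
            case PInf
            thus ?thesis using dv_mult[OF dv, of c] vc by simp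
          next
            case MInf thus ?thesis using dv_not_minf[OF dv] by simp
          qed
          thus ?thesis using \<open>\<not> k < m - d\<close> by (simp add: i_def)
        qed
      qed
      have "coeff P' k = coeff P k - (if k < m - d then 0 else c * coeff B (k - (m - d)))"
        by (simp add: P'_def coeff_monom_mult)
      thus ?thesis using dv_diff_ge[OF dv c1 c2] by simp
    qed
    have A1: "F (j + d) - val b \<le> val (coeff (P' div B) j)"
    proof (cases "P' = 0")
      case True thus ?thesis using dv_zero[OF dv] by simp
    next
      case False
      have "degree (monom c (m - d) * B) \<le> m"
      proof -
        have "degree (monom c (m - d) * B) \<le> degree (monom c (m - d)) + degree B" by (rule degree_mult_le)
        also have "\<dots> \<le> (m - d) + d" using degree_monom_le[of c "m-d"] by (simp add: d_def)
        also have "\<dots> = m" using md m_def by simp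
        finally show ?thesis .
      qed
      hence dle: "degree P' \<le> m" unfolding P'_def m_def using degree_diff_le by blast
      have "coeff P' m = 0"
        using md b0 by (simp add: P'_def coeff_monom_mult c_def m_def d_def b_def)
      hence "degree P' \<noteq> m" using False by (metis leading_coeff_0_iff)
      hence "degree P' < degree P" using dle m_def by simp
      from less.hyps[OF this FP'] show ?thesis by (simp add: d_def b_def)
    qed
    have A2: "F (j + d) - val b \<le> val (coeff (monom c (m - d)) j)"
    proof (cases "j = m - d")
      case True
      hence "j + d = m" using md m_def by simp
      hence "F (j + d) \<le> ereal vp" using less.prems[of m] vp m_def by simp
      hence "F (j + d) - val b \<le> ereal (vp - vb)" using vb by (cases "F (j+d)") auto
      thus ?thesis using True vc by (simp add: coeff_monom)
    next
      case False thus ?thesis using dv_zero[OF dv] by (simp add: coeff_monom)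
    qed
    show ?thesis using dv_add_ge[OF dv A2 A1] eq by (simp add: d_def b_def)
  qed
qed

end


lemma conv_fun_affine: "conv_fun N (\<lambda>x. ereal (a + M * x))"
  unfolding conv_fun_def by (auto simp: algebra_simps)

lemma conv_fun_const: "conv_fun N (\<lambda>x. ereal a)"
  using conv_fun_affine[of N a 0] by simp

lemma nf_upper: "conv_fun (real (degree Q)) g \<Longrightarrow> (\<forall>i\<le>degree Q. g (real i) \<le> val (coeff Q i)) \<Longrightarrow>
  g x \<le> newton_fun val Q x"
  unfolding newton_fun_def by (rule SUP_upper) auto

lemma nf_le_coeff: "i \<le> degree Q \<Longrightarrow> newton_fun val Q (real i) \<le> val (coeff Q i)"
  unfolding newton_fun_def by (rule SUP_least) auto

lemma nf_conv:
  assumes "x \<in> {0..real (degree Q)}" "y \<in> {0..real (degree Q)}" "t \<in> {0..1}"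
  shows "newton_fun val Q ((1-t)*x+t*y) \<le> ereal (1-t) * newton_fun val Q x + ereal t * newton_fun val Q y"
  unfolding newton_fun_def[of val Q "(1-t)*x+t*y"]
proof (rule SUP_least)
  fix g assume g: "g \<in> {g. conv_fun (real (degree Q)) g \<and> (\<forall>i\<le>degree Q. g (real i) \<le> val (coeff Q i))}"
  hence "g ((1-t)*x+t*y) \<le> ereal (1-t) * g x + ereal t * g y" using assms unfolding conv_fun_def by blast
  also have "\<dots> \<le> ereal (1-t) * newton_fun val Q x + ereal t * newton_fun val Q y"
  proof (rule add_mono)
    show "ereal (1-t) * g x \<le> ereal (1-t) * newton_fun val Q x"
      using assms(3) nf_upper[of Q g val x] g by (intro ereal_mult_left_mono) auto
    show "ereal t * g y \<le> ereal t * newton_fun val Q y"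
      using assms(3) nf_upper[of Q g val y] g by (intro ereal_mult_left_mono) auto
  qed
  finally show "g ((1-t)*x+t*y) \<le> ereal (1-t) * newton_fun val Q x + ereal t * newton_fun val Q y" .
qed

lemma coeff_lower_const:
  assumes dv: "discrete_valuation val"
  shows "\<exists>C. \<forall>i\<le>degree Q. ereal C \<le> val (coeff Q i)"
proof -
  define C where "C = Min ((\<lambda>i. real_of_ereal (val (coeff Q i))) ` {..degree Q})"
  have "ereal C \<le> val (coeff Q i)" if "i \<le> degree Q" for i
  proof (cases "val (coeff Q i)")
    case (real r)
    have "C \<le> real_of_ereal (val (coeff Q i))" unfolding C_def using that by (intro Min_le) auto
    thus ?thesis using real by simp
  next
    case MInf thus ?thesis using dv_not_minf[OF dv] by simp
  qed simp
  thus ?thesis by blast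
qed

lemma nf_lower_const:
  assumes dv: "discrete_valuation val"
  shows "\<exists>C. \<forall>x. ereal C \<le> newton_fun val Q x"
proof -
  obtain C where C: "\<forall>i\<le>degree Q. ereal C \<le> val (coeff Q i)" using coeff_lower_const[OF dv] by blast
  have "ereal C \<le> newton_fun val Q x" for x
    using nf_upper[of Q "\<lambda>x. ereal C" val x] conv_fun_const C by blast
  thus ?thesis by blast
qed

lemma nf_lead:
  assumes dv: "discrete_valuation val" and Q0: "Q \<noteq> 0"
  shows "newton_fun val Q (real (degree Q)) = val (lead_coeff Q)"
proof (rule antisym)
  show "newton_fun val Q (real (degree Q)) \<le> val (lead_coeff Q)" by (rule nf_le_coeff) simp
  obtain vb where vb: "val (lead_coeff Q) = ereal vb" using dv_fin[OF dv, of "lead_coeff Q"] Q0 by auto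
  define D where "D = degree Q"
  define M where "M = Max (insert 0 ((\<lambda>i. \<bar>vb - real_of_ereal (val (coeff Q i))\<bar>) ` {..<D}))"
  have M0: "0 \<le> M" unfolding M_def by (intro Max_ge) auto
  have g: "ereal (vb - M * real D + M * real i) \<le> val (coeff Q i)" if "i \<le> D" for i
  proof (cases "i = D")
    case True thus ?thesis using vb D_def by simp
  next
    case False
    hence iD: "i < D" using that by simp
    show ?thesis
    proof (cases "val (coeff Q i)")
      case (real r)
      have "\<bar>vb - r\<bar> \<le> M" unfolding M_def using iD real
        by (intro Max_ge) (auto intro!: image_eqI[where x=i])
      moreover have "M \<le> M * (real D - real i)"
      proof -
        have "real (Suc i) \<le> real D" using iD by (simp only: of_nat_le_iff Suc_le_eq)
        hence "1 \<le> real D - real i" by simp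
        from mult_left_mono[OF this M0] show ?thesis by simp
      qed
      ultimately have "vb - M * real D + M * real i \<le> r" by (simp add: algebra_simps)
      thus ?thesis using real by simp
    next
      case MInf thus ?thesis using dv_not_minf[OF dv] by simp
    qed simp
  qed
  have "ereal (vb - M * real D + M * real D) \<le> newton_fun val Q (real D)"
    using nf_upper[of Q "\<lambda>x. ereal ((vb - M * real D) + M * x)" val "real D"] conv_fun_affine g
    unfolding D_def by blast
  thus "val (lead_coeff Q) \<le> newton_fun val Q (real (degree Q))" using vb D_def by simp
qed



locale cvx =
  fixes \<psi> :: "real \<Rightarrow> ereal" and d :: nat and vd vd1 lam :: real
  assumes cv: "\<And>x y t. x \<in> {0..real d} \<Longrightarrow> y \<in> {0..real d} \<Longrightarrow> t \<in> {0..1} \<Longrightarrow>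
      \<psi> ((1-t)*x+t*y) \<le> ereal (1-t) * \<psi> x + ereal t * \<psi> y"
    and nm: "\<And>x. \<psi> x \<noteq> -\<infinity>"
    and d1: "1 \<le> d"
    and vd: "\<psi> (real d) = ereal vd" and vd1: "\<psi> (real d - 1) = ereal vd1"
    and lam: "lam = vd - vd1"
begin

lemma L1: assumes "m \<le> d" shows "ereal (vd + lam * (real m - real d)) \<le> \<psi> (real m)"
proof (cases "m + 1 < d")
  case False
  hence "m = d \<or> m = d - 1" using assms by linarith
  thus ?thesis
  proof
    assume "m = d" thus ?thesis using vd by simp
  next
    assume m: "m = d - 1"
    hence "real m = real d - 1" using d1 by simp
    thus ?thesis using vd1 lam by simp
  qed
next
  case True
  define a where "a = real d - real m"
  have a1: "a > 1" using True unfolding a_def by linarith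
  define t where "t = (a - 1) / a"
  have t01: "t \<in> {0..1}" using a1 unfolding t_def by (auto simp: field_simps)
  have ta: "t * a = a - 1" using a1 unfolding t_def by simp
  have "(1-t) * real m + t * real d = real m + t * a" unfolding a_def by (simp add: algebra_simps)
  hence pt: "(1-t) * real m + t * real d = real d - 1" using ta unfolding a_def by simp
  have "\<psi> (real d - 1) \<le> ereal (1-t) * \<psi> (real m) + ereal t * \<psi> (real d)"
    using cv[of "real m" "real d" t] t01 assms by (simp add: pt)
  show ?thesis
  proof (cases "\<psi> (real m)")
    case (real r)
    have "vd1 \<le> (1-t) * r + t * vd"
      using \<open>\<psi> (real d - 1) \<le> _\<close> real vd vd1 by simp
    hence "a * vd1 \<le> a * ((1-t) * r + t * vd)" using a1 by simp
    also have "a * ((1-t) * r + t * vd) = r + (a - 1) * vd" using a1 unfolding t_def by (simp add: field_simps)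
    finally have X: "a * vd1 \<le> r + (a - 1) * vd" .
    have "vd + lam * (real m - real d) = a * vd1 - (a - 1) * vd" unfolding lam a_def by (simp add: algebra_simps)
    hence "vd + lam * (real m - real d) \<le> r" using X by linarith
    thus ?thesis using real by simp
  next
    case MInf thus ?thesis using nm by simp
  qed simp
qed

lemma L2: assumes "k \<le> i" "i \<le> d" shows "\<psi> (real i) \<le> \<psi> (real k) + ereal (lam * (real i - real k))"
proof (cases "\<psi> (real k)")
  case (real r)
  have Lk: "vd + lam * (real k - real d) \<le> r" using L1[of k] assms real by simp
  show ?thesis
  proof (cases "k = i")
    case True thus ?thesis by simp
  next
    case False
    hence ki: "k < i" using assms by simp
    show ?thesis
    proof (cases "i = d")
      case True thus ?thesis using vd real Lk by (simp add: algebra_simps)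
    next
      case False
      hence id: "i < d" using assms by simp
      define t where "t = (real i - real k) / (real d - real k)"
      have t01: "t \<in> {0..1}" using ki id unfolding t_def by (auto simp: field_simps)
      have ta: "t * (real d - real k) = real i - real k" using ki id unfolding t_def by simp
      have "(1-t) * real k + t * real d = real k + t * (real d - real k)" by (simp add: algebra_simps)
      hence pt: "(1-t) * real k + t * real d = real i" using ta by simp
      have "\<psi> (real i) \<le> ereal (1-t) * \<psi> (real k) + ereal t * \<psi> (real d)"
        using cv[of "real k" "real d" t] t01 ki id by (simp add: pt)
      also have "\<dots> = ereal ((1-t) * r + t * vd)" using real vd by simp
      also have "(1-t) * r + t * vd = r + t * (vd - r)" by (simp add: algebra_simps)
      also have "t * (vd - r) \<le> t * (lam * (real d - real k))"
        using Lk t01 by (intro mult_left_mono) (auto simp: algebra_simps)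
      also have "t * (lam * (real d - real k)) = lam * (real i - real k)"
        using ta by (metis mult.left_commute)
      finally show ?thesis using real by simp
    qed
  qed
next
  case MInf thus ?thesis using nm by simp
qed simp

end


definition Fphi :: "real \<Rightarrow> real \<Rightarrow> (real \<Rightarrow> ereal) \<Rightarrow> nat \<Rightarrow> ereal" where
  "Fphi N lam \<phi> k = (INF h\<in>{h::real. 0 \<le> h \<and> real k + h \<le> N}. \<phi> (real k + h) - ereal lam * ereal h)"

lemma F1: "Fphi N lam \<phi> k + ereal lam \<le> Fphi N lam \<phi> (Suc k)"
  unfolding Fphi_def[of N lam \<phi> "Suc k"]
proof (rule INF_greatest)
  fix h assume h: "h \<in> {h::real. 0 \<le> h \<and> real (Suc k) + h \<le> N}"
  hence "Fphi N lam \<phi> k \<le> \<phi> (real k + (h + 1)) - ereal lam * ereal (h + 1)"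
    unfolding Fphi_def by (intro INF_lower) auto
  also have "\<dots> = (\<phi> (real (Suc k) + h) - ereal lam * ereal h) - ereal lam"
    by (cases "\<phi> (real (Suc k) + h)") (auto simp: algebra_simps)
  finally show "Fphi N lam \<phi> k + ereal lam \<le> \<phi> (real (Suc k) + h) - ereal lam * ereal h"
    by (cases "\<phi> (real (Suc k) + h) - ereal lam * ereal h"; cases "Fphi N lam \<phi> k") auto
qed

lemma F2:
  assumes "\<And>k. real k \<le> N \<Longrightarrow> \<phi> (real k) \<le> val (coeff P k)"
    and "\<And>k. N < real k \<Longrightarrow> val (coeff P k) = \<infinity>"
  shows "Fphi N lam \<phi> k \<le> val (coeff P k)"
proof (cases "real k \<le> N")
  case True
  hence "Fphi N lam \<phi> k \<le> \<phi> (real k + 0) - ereal lam * ereal 0"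
    unfolding Fphi_def by (intro INF_lower) auto
  thus ?thesis using assms(1)[OF True] by (simp add: zero_ereal_def[symmetric])
next
  case False thus ?thesis using assms(2) by simp
qed

lemma F_empty: "N < real k \<Longrightarrow> Fphi N lam \<phi> k = \<infinity>"
proof -
  assume "N < real k"
  hence "{h::real. 0 \<le> h \<and> real k + h \<le> N} = {}" by auto
  thus ?thesis unfolding Fphi_def by (simp only: image_empty Inf_empty top_ereal_def)
qed

lemma F3:
  assumes "\<And>x. x \<in> {d..N} \<Longrightarrow> ereal c + ereal lam * ereal (x - d) \<le> \<phi> x" and "d \<le> real k"
  shows "ereal (c + lam * (real k - d)) \<le> Fphi N lam \<phi> k"
  unfolding Fphi_def
proof (rule INF_greatest)
  fix h assume h: "h \<in> {h::real. 0 \<le> h \<and> real k + h \<le> N}"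
  hence "ereal c + ereal lam * ereal (real k + h - d) \<le> \<phi> (real k + h)" using assms by auto
  thus "ereal (c + lam * (real k - d)) \<le> \<phi> (real k + h) - ereal lam * ereal h"
    by (cases "\<phi> (real k + h)") (auto simp: algebra_simps)
qed

lemma F5:
  assumes "\<And>x. ereal C \<le> \<phi> x" "0 \<le> N"
  shows "ereal (C - \<bar>lam\<bar> * N) \<le> Fphi N lam \<phi> k"
  unfolding Fphi_def
proof (rule INF_greatest)
  fix h assume h: "h \<in> {h::real. 0 \<le> h \<and> real k + h \<le> N}"
  hence "h \<le> N" by auto
  have "lam * h \<le> \<bar>lam\<bar> * N"
    using h \<open>h \<le> N\<close> by (metis abs_ge_self abs_mult abs_of_nonneg mult_mono abs_ge_zero dual_order.trans mem_Collect_eq)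
  thus "ereal (C - \<bar>lam\<bar> * N) \<le> \<phi> (real k + h) - ereal lam * ereal h"
    using assms(1)[of "real k + h"] by (cases "\<phi> (real k + h)") auto
qed

lemma F4:
  assumes "nf_slope (real d) \<psi> = ereal lam"
  shows "nf_div N (real d) \<phi> \<psi> (real j) = Fphi N lam \<phi> (j + d) - \<psi> (real d)"
  unfolding nf_div_def Fphi_def assms by (simp add: add.assoc)

lemma extreme_lead:
  assumes "newton_fun val Q (real (degree Q)) = ereal v"
  shows "(real (degree Q), v) extreme_point_of newton_polygon val Q"
  unfolding extreme_point_of_def
proof safe
  show "(real (degree Q), v) \<in> newton_polygon val Q"
    unfolding newton_polygon_def epi_def using assms by simp
next
  fix a b assume a: "a \<in> newton_polygon val Q" and b: "b \<in> newton_polygon val Q"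
    and s: "(real (degree Q), v) \<in> open_segment a b"
  obtain u where u: "0 < u" "u < 1" "(real (degree Q), v) = (1 - u) *\<^sub>R a + u *\<^sub>R b" and ab: "a \<noteq> b"
    using s unfolding in_segment by blast
  obtain xa ya where A: "a = (xa, ya)" by (cases a)
  obtain xb yb where B: "b = (xb, yb)" by (cases b)
  have xa: "xa \<le> real (degree Q)" and xb: "xb \<le> real (degree Q)"
    and ya: "newton_fun val Q xa \<le> ereal ya" and yb: "newton_fun val Q xb \<le> ereal yb"
    using a b A B unfolding newton_polygon_def epi_def by auto
  have ex: "real (degree Q) = (1 - u) * xa + u * xb" and ey: "v = (1 - u) * ya + u * yb"
    using u(3) A B by auto
  have "xa = real (degree Q)"
  proof (rule ccontr)
    assume "xa \<noteq> real (degree Q)"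
    hence "xa < real (degree Q)" using xa by simp
    hence "(1 - u) * xa < (1 - u) * real (degree Q)" using u by simp
    moreover have "u * xb \<le> u * real (degree Q)" using xb u by simp
    ultimately show False using ex by (simp add: algebra_simps)
  qed
  moreover have "xb = real (degree Q)" using ex \<open>xa = real (degree Q)\<close> u by (simp add: algebra_simps)
  ultimately have "v \<le> ya" "v \<le> yb" using ya yb assms by auto
  hence "ya = v \<and> yb = v"
  proof -
    assume h1: "v \<le> ya" and h2: "v \<le> yb"
    have p1: "0 \<le> (1-u)*(ya - v)" using h1 u by simp
    have p2: "0 \<le> u*(yb - v)" using h2 u by simp
    have "(1-u)*(ya - v) + u*(yb - v) = 0" using ey by (simp add: algebra_simps)
    hence "(1-u)*(ya - v) = 0" "u*(yb - v) = 0" using p1 p2 by linarith+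
    thus ?thesis using u by simp
  qed
  thus False using ab A B \<open>xa = _\<close> \<open>xb = _\<close> by simp
qed



lemma divmod_pert:
  fixes A B dA dB :: "'a::field poly"
  assumes B0: "B \<noteq> 0" and B'0: "B + dB \<noteq> 0" and dg: "degree (B + dB) = degree B"
  shows "(A + dA) div (B + dB) - A div B = (dA - (A div B) * dB) div (B + dB)"
    and "(A + dA) mod (B + dB) - A mod B = (dA - (A div B) * dB) mod (B + dB)"
proof -
  define Q where "Q = A div B"
  define R where "R = A mod B"
  define P where "P = dA - Q * dB"
  have "A = Q * B + R" unfolding Q_def R_def by simp
  hence eq: "A + dA = (R + P) + Q * (B + dB)" unfolding P_def by (simp add: algebra_simps)
  have Rd: "R div (B + dB) = 0 \<and> R mod (B + dB) = R"
  proof (cases "R = 0")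
    case False
    hence "degree R < degree (B + dB)" using degree_mod_less[OF B0, of A] dg R_def by simp
    thus ?thesis by (simp add: div_poly_less mod_poly_less)
  qed simp
  have "(A + dA) div (B + dB) = Q + (R + P) div (B + dB)"
    unfolding eq using B'0 by (simp add: div_mult_self1)
  also have "(R + P) div (B + dB) = P div (B + dB)" using Rd by (simp add: poly_div_add_left)
  finally show "(A + dA) div (B + dB) - A div B = (dA - (A div B) * dB) div (B + dB)"
    unfolding P_def Q_def by simp
  have "(A + dA) mod (B + dB) = (R + P) mod (B + dB)"
    unfolding eq by simp
  also have "\<dots> = R + P mod (B + dB)" using Rd by (simp add: poly_mod_add_left)
  finally show "(A + dA) mod (B + dB) - A mod B = (dA - (A div B) * dB) mod (B + dB)"
    unfolding P_def Q_def R_def by simp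
qed

lemma conv_plus_le: "x \<in> {0..N} \<Longrightarrow> conv_plus N f g x \<le> f x \<and> conv_plus N f g x \<le> g x"
  unfolding conv_plus_def by (auto intro!: SUP_least)

lemma conv_plus_ge: "conv_fun N h \<Longrightarrow> (\<forall>y\<in>{0..N}. h y \<le> f y \<and> h y \<le> g y) \<Longrightarrow> h x \<le> conv_plus N f g x"
  unfolding conv_plus_def by (rule SUP_upper) auto

lemma nf_div_lower:
  assumes "\<And>x. ereal C \<le> \<phi> x" "nf_slope d \<psi> = ereal lam" "\<psi> d = ereal vb" "0 \<le> z" "0 \<le> d" "0 \<le> N"
  shows "ereal (C - \<bar>lam\<bar> * N - vb) \<le> nf_div N d \<phi> \<psi> z"
proof -
  have "ereal (C - \<bar>lam\<bar> * N) \<le> (INF h \<in> {h::real. 0 \<le> h \<and> z + d + h \<le> N}. \<phi> (z + d + h) - nf_slope d \<psi> * ereal h)"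
  proof (rule INF_greatest)
    fix h assume h: "h \<in> {h::real. 0 \<le> h \<and> z + d + h \<le> N}"
    hence h0: "0 \<le> h" "h \<le> N" using assms by auto
    have "lam * h \<le> \<bar>lam\<bar> * N"
      using h0 by (metis abs_ge_self abs_ge_zero dual_order.trans mult_mono mult_right_mono)
    thus "ereal (C - \<bar>lam\<bar> * N) \<le> \<phi> (z + d + h) - nf_slope d \<psi> * ereal h"
      using assms(1)[of "z + d + h"] assms(2) by (cases "\<phi> (z + d + h)") auto
  qed
  thus ?thesis unfolding nf_div_def assms(3)
    by (cases "INF h \<in> {h::real. 0 \<le> h \<and> z + d + h \<le> N}. \<phi> (z + d + h) - nf_slope d \<psi> * ereal h") auto
qed



theorem proposition3p3:
  fixes val :: "'a::field \<Rightarrow> ereal"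
    and A_app B_app :: "'a poly"
    and \<phi>A \<phi>B :: "real \<Rightarrow> ereal"
  defines "n \<equiv> degree A_app"
    and "d \<equiv> degree B_app"
  defines "\<phi> \<equiv> conv_plus (real n) \<phi>A
              (conv_times (real d) (real n - real d) \<phi>B
                 (nf_div (real n) (real d) (newton_fun val A_app) (newton_fun val B_app)))"
  assumes K: "complete_dvf val"
    and deg: "n \<ge> d" "d \<ge> 1"
    and low: "\<exists>i<d. coeff B_app i \<noteq> 0"
    and NA: "newton_function n \<phi>A"
    and NB: "newton_function d \<phi>B"
    and ndA: "nondegenerate val A_app \<phi>A"
    and ndB: "nondegenerate val B_app \<phi>B"
  shows "\<forall>\<delta>A \<delta>B. degree \<delta>A \<le> n \<and> degree \<delta>B \<le> d \<and>
            coeffs_ge val n \<delta>A \<phi>A \<and> coeffs_ge val d \<delta>B \<phi>B \<longrightarrow>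
            coeffs_ge val (n - d) ((A_app + \<delta>A) div (B_app + \<delta>B) - A_app div B_app)
              (nf_div (real n) (real d) \<phi> (newton_fun val B_app)) \<and>
            coeffs_ge val (d - 1) ((A_app + \<delta>A) mod (B_app + \<delta>B) - A_app mod B_app)
              (nf_mod (real n) (real d) \<phi> (newton_fun val B_app))"
proof (intro allI impI)
  fix \<delta>A \<delta>B :: "'a poly"
  assume H: "degree \<delta>A \<le> n \<and> degree \<delta>B \<le> d \<and> coeffs_ge val n \<delta>A \<phi>A \<and> coeffs_ge val d \<delta>B \<phi>B"
  have dv: "discrete_valuation val" using K unfolding complete_dvf_def by blast
  define \<psi> where "\<psi> = newton_fun val B_app"
  define NFA where "NFA = newton_fun val A_app"
  obtain i0 where i0: "i0 < d" "coeff B_app i0 \<noteq> 0" using low by blast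
  have B0: "B_app \<noteq> 0" using i0 by auto
  have A0: "A_app \<noteq> 0" using deg unfolding n_def by auto
  obtain vb where vb: "val (lead_coeff B_app) = ereal vb" using dv_fin[OF dv, of "lead_coeff B_app"] B0 by auto
  have \<psi>d: "\<psi> (real d) = ereal vb" using nf_lead[OF dv B0] vb unfolding \<psi>_def d_def by simp
  obtain CB where CB: "\<And>x. ereal CB \<le> \<psi> x" using nf_lower_const[OF dv, of B_app] unfolding \<psi>_def by blast
  obtain CA where CA: "\<And>x. ereal CA \<le> NFA x" using nf_lower_const[OF dv, of A_app] unfolding NFA_def by blast
  have nm: "\<psi> x \<noteq> -\<infinity>" for x using CB[of x] by auto
  have \<psi>le: "\<psi> (real i) \<le> val (coeff B_app i)" if "i \<le> d" for i
    using nf_le_coeff[of i B_app val] that unfolding \<psi>_def d_def by simp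
  have \<psi>conv: "\<And>x y t. x \<in> {0..real d} \<Longrightarrow> y \<in> {0..real d} \<Longrightarrow> t \<in> {0..1} \<Longrightarrow>
      \<psi> ((1-t)*x+t*y) \<le> ereal (1-t) * \<psi> x + ereal t * \<psi> y"
    unfolding \<psi>_def d_def by (rule nf_conv)
  have "\<psi> (real d - 1) \<noteq> \<infinity>"
  proof -
    obtain b0 where b0: "val (coeff B_app i0) = ereal b0" using dv_fin[OF dv] i0 by blast
    have "\<psi> (real i0) \<noteq> \<infinity>" using \<psi>le[of i0] i0 b0 by auto
    then obtain r0 where r0: "\<psi> (real i0) = ereal r0" using nm[of "real i0"] by (cases "\<psi> (real i0)") auto
    define t where "t = (real d - 1 - real i0) / (real d - real i0)"
    have t01: "t \<in> {0..1}" using i0 unfolding t_def by (auto simp: field_simps)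
    have ta: "t * (real d - real i0) = real d - 1 - real i0" using i0 unfolding t_def by simp
    have "(1-t) * real i0 + t * real d = real i0 + t * (real d - real i0)" by (simp add: algebra_simps)
    hence pt: "(1-t) * real i0 + t * real d = real d - 1" using ta by simp
    have "\<psi> (real d - 1) \<le> ereal (1-t) * \<psi> (real i0) + ereal t * \<psi> (real d)"
      using \<psi>conv[of "real i0" "real d" t] t01 i0 by (simp add: pt)
    also have "\<dots> = ereal ((1-t) * r0 + t * vb)" using r0 \<psi>d by simp
    finally show ?thesis by auto
  qed
  then obtain vd1 where vd1: "\<psi> (real d - 1) = ereal vd1" using nm[of "real d - 1"] by (cases "\<psi> (real d - 1)") auto
  define lam where "lam = vb - vd1"
  have slope: "nf_slope (real d) \<psi> = ereal lam" unfolding nf_slope_def lam_def using \<psi>d vd1 by simp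
  interpret cvx \<psi> d vb vd1 lam
    using \<psi>conv nm deg(2) \<psi>d vd1 lam_def by unfold_locales auto

  have degA: "degree \<delta>A \<le> n" and degB: "degree \<delta>B \<le> d"
    and cA: "coeffs_ge val n \<delta>A \<phi>A" and cB: "coeffs_ge val d \<delta>B \<phi>B" using H by auto
  have ndB1: "\<And>x. x \<in> {0..real d} \<Longrightarrow> \<psi> x \<le> \<phi>B x"
    using ndB unfolding nondegenerate_def \<psi>_def d_def by blast
  have ndA1: "\<And>x. x \<in> {0..real n} \<Longrightarrow> NFA x \<le> \<phi>A x"
    using ndA unfolding nondegenerate_def NFA_def n_def by blast
  have "(real d, vb) extreme_point_of newton_polygon val B_app"
    using extreme_lead[of val B_app vb] \<psi>d unfolding \<psi>_def d_def by simp
  hence vbB: "ereal vb < \<phi>B (real d)" using ndB unfolding nondegenerate_def d_def by fastforce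
  have dBd: "ereal vb < val (coeff \<delta>B d)" using vbB cB unfolding coeffs_ge_def by fastforce
  define B' where "B' = B_app + \<delta>B"
  have cB'd: "val (coeff B' d) = ereal vb"
    unfolding B'_def using dv_strict[OF dv, of "lead_coeff B_app" "coeff \<delta>B d"] vb dBd by (simp add: d_def)
  hence cB'd0: "coeff B' d \<noteq> 0" using dv_zero[OF dv] by auto
  have degB': "degree B' = d"
  proof (rule antisym)
    show "degree B' \<le> d" unfolding B'_def using degB by (simp add: degree_add_le d_def)
    show "d \<le> degree B'" using cB'd0 by (rule le_degree)
  qed
  have B'0: "B' \<noteq> 0" using cB'd0 by auto
  have leadB': "val (lead_coeff B') = ereal vb" using cB'd degB' by simp
  have \<psi>B': "\<psi> (real i) \<le> val (coeff B' i)" if "i \<le> d" for i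
  proof -
    have "\<psi> (real i) \<le> \<phi>B (real i)" using ndB1 that by simp
    also have "\<dots> \<le> val (coeff \<delta>B i)" using cB that unfolding coeffs_ge_def by blast
    finally show ?thesis using \<psi>le[OF that] dv_add_ge[OF dv] unfolding B'_def by simp
  qed
  have slopeB': "\<And>i. i \<le> degree B' \<Longrightarrow> val (lead_coeff B') + ereal (lam * (real i - real (degree B'))) \<le> val (coeff B' i)"
    using L1 \<psi>B' leadB' degB' by (metis order_trans plus_ereal.simps(1))
  have slopeB: "\<And>i. i \<le> degree B_app \<Longrightarrow> val (lead_coeff B_app) + ereal (lam * (real i - real (degree B_app))) \<le> val (coeff B_app i)"
    using L1 \<psi>le vb unfolding d_def by (metis order_trans plus_ereal.simps(1))
  define Qa where "Qa = A_app div B_app"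
  define FA where "FA = Fphi (real n) lam NFA"
  have qa: "FA (j + d) - ereal vb \<le> val (coeff Qa j)" for j
  proof -
    have "FA (j + degree B_app) - val (lead_coeff B_app) \<le> val (coeff (A_app div B_app) j)"
      unfolding FA_def
    proof (rule div_bound[OF dv B0 slopeB])
      show "\<And>k. Fphi (real n) lam NFA k + ereal lam \<le> Fphi (real n) lam NFA (Suc k)" by (rule F1)
      fix k
      show "Fphi (real n) lam NFA k \<le> val (coeff A_app k)"
      proof (rule F2)
        show "NFA (real k) \<le> val (coeff A_app k)" if "real k \<le> real n" for k
          using nf_le_coeff[of k A_app val] that unfolding NFA_def n_def by simp
        show "val (coeff A_app k) = \<infinity>" if "real n < real k" for k
          using that coeff_eq_0[of A_app k] dv_zero[OF dv] unfolding n_def by simp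
      qed
    qed
    thus ?thesis using vb unfolding Qa_def d_def by simp
  qed
  have Qa0: "coeff Qa j = 0" if "n - d < j" for j
  proof -
    have "FA (j + d) = \<infinity>" unfolding FA_def using that deg by (intro F_empty) simp
    hence "val (coeff Qa j) = \<infinity>" using qa[of j] by simp
    thus ?thesis using dv_inf_iff[OF dv] by simp
  qed
  have degQa: "degree Qa \<le> n - d" using Qa0 by (intro degree_le) auto
  define DA where "DA = nf_div (real n) (real d) NFA \<psi>"
  have DAj: "DA (real j) = FA (j + d) - ereal vb" for j
    unfolding DA_def FA_def using F4[OF slope] \<psi>d by simp
  define X where "X = conv_times (real d) (real n - real d) \<phi>B DA"
  have \<phi>eq: "\<phi> = conv_plus (real n) \<phi>A X" unfolding \<phi>_def X_def DA_def NFA_def \<psi>_def by simp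
  define P where "P = \<delta>A - Qa * \<delta>B"
  have Pbound: "\<phi> (real k) \<le> val (coeff P k)" if "k \<le> n" for k
  proof -
    have kin: "real k \<in> {0..real n}" using that by simp
    have "\<phi> (real k) \<le> \<phi>A (real k)" "\<phi> (real k) \<le> X (real k)"
      using conv_plus_le[OF kin] unfolding \<phi>eq by auto
    have 1: "\<phi> (real k) \<le> val (coeff \<delta>A k)"
      using \<open>\<phi> (real k) \<le> \<phi>A (real k)\<close> cA that unfolding coeffs_ge_def by (meson order_trans)
    have "X (real k) \<le> val (coeff Qa j * coeff \<delta>B (k - j))" if j: "j \<in> {..k}" for j
    proof (cases "n - d < j \<or> d < k - j")
      case True
      hence "coeff Qa j * coeff \<delta>B (k - j) = 0" using Qa0 coeff_eq_0[of \<delta>B "k - j"] degB by auto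
      thus ?thesis using dv_zero[OF dv] by (metis top_ereal_def top_greatest)
    next
      case False
      have "X (real k) \<le> \<phi>B (real (k - j)) + DA (real j)"
        unfolding X_def conv_times_def
        by (rule INF_lower2[of "(real (k - j), real j)"]) (use False j deg in auto)
      also have "\<dots> \<le> val (coeff \<delta>B (k - j)) + val (coeff Qa j)"
      proof (rule add_mono)
        show "\<phi>B (real (k - j)) \<le> val (coeff \<delta>B (k - j))" using cB False unfolding coeffs_ge_def by simp
        show "DA (real j) \<le> val (coeff Qa j)" using DAj qa by simp
      qed
      also have "\<dots> = val (coeff Qa j * coeff \<delta>B (k - j))" using dv_mult[OF dv] by (simp add: add.commute)
      finally show ?thesis .
    qed
    hence "X (real k) \<le> val (coeff (Qa * \<delta>B) k)" unfolding coeff_mult by (intro dv_sum_ge[OF dv]) auto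
    hence 2: "\<phi> (real k) \<le> val (coeff (Qa * \<delta>B) k)" using \<open>\<phi> (real k) \<le> X (real k)\<close> by simp
    show ?thesis using dv_diff_ge[OF dv 1 2] unfolding P_def by simp
  qed
  have Pdeg: "coeff P k = 0" if "n < k" for k
  proof -
    have "degree (Qa * \<delta>B) \<le> n"
      using degree_mult_le[of Qa \<delta>B] degQa degB deg by linarith
    thus ?thesis using that degA unfolding P_def by (simp add: coeff_eq_0)
  qed

  define C0 where "C0 = min CA (CB + (CA - \<bar>lam\<bar> * real n - vb))"
  have DAlow: "ereal (CA - \<bar>lam\<bar> * real n - vb) \<le> DA z" if "0 \<le> z" for z
    unfolding DA_def using nf_div_lower[of CA NFA "real d" \<psi> lam vb z "real n"] CA slope \<psi>d that by simp
  have Xlow: "ereal (CB + (CA - \<bar>lam\<bar> * real n - vb)) \<le> X x" for x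
    unfolding X_def conv_times_def
  proof (rule INF_greatest)
    fix yz assume yz: "yz \<in> {(y, z). y \<in> {0..real d} \<and> z \<in> {0..real n - real d} \<and> y + z = x}"
    have "ereal CB \<le> \<phi>B (fst yz)" using CB[of "fst yz"] ndB1[of "fst yz"] yz by auto
    moreover have "ereal (CA - \<bar>lam\<bar> * real n - vb) \<le> DA (snd yz)" using DAlow yz by auto
    ultimately have "ereal CB + ereal (CA - \<bar>lam\<bar> * real n - vb) \<le> \<phi>B (fst yz) + DA (snd yz)"
      by (rule add_mono)
    thus "ereal (CB + (CA - \<bar>lam\<bar> * real n - vb)) \<le> \<phi>B (fst yz) + DA (snd yz)" by simp
  qed
  have \<phi>low: "ereal C0 \<le> \<phi> x" for x
    unfolding \<phi>eq
  proof (rule conv_plus_ge[OF conv_fun_const], intro ballI conjI)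
    fix y assume y: "y \<in> {0..real n}"
    show "ereal C0 \<le> \<phi>A y" using CA[of y] ndA1[OF y] unfolding C0_def by (meson min.cobounded1 ereal_less_eq(3) order_trans)
    show "ereal C0 \<le> X y" using Xlow[of y] unfolding C0_def by (meson min.cobounded2 ereal_less_eq(3) order_trans)
  qed
  define S where "S = {c::real. \<forall>x\<in>{real d..real n}. ereal c + nf_slope (real d) \<psi> * ereal (x - real d) \<le> \<phi> x}"
  define c where "c = Sup S"
  have S0: "C0 - \<bar>lam\<bar> * real n \<in> S"
    unfolding S_def slope
  proof (intro CollectI ballI)
    fix x assume x: "x \<in> {real d..real n}"
    have "lam * (x - real d) \<le> \<bar>lam\<bar> * real n"
    proof -
      have "lam * (x - real d) \<le> \<bar>lam\<bar> * (x - real d)" using x by (intro mult_right_mono) auto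
      also have "\<dots> \<le> \<bar>lam\<bar> * real n" using x by (intro mult_left_mono) auto
      finally show ?thesis .
    qed
    hence "ereal (C0 - \<bar>lam\<bar> * real n) + ereal lam * ereal (x - real d) \<le> ereal C0" by simp
    thus "ereal (C0 - \<bar>lam\<bar> * real n) + ereal lam * ereal (x - real d) \<le> \<phi> x" using \<phi>low[of x] by (meson order_trans)
  qed
  obtain an where an: "\<phi>A (real n) = ereal an"
  proof -
    have "\<phi>A (real n) \<noteq> \<infinity>" using NA unfolding newton_function_def by blast
    moreover have "\<phi>A (real n) \<noteq> -\<infinity>" using ndA1[of "real n"] CA[of "real n"] by auto
    ultimately show ?thesis using that by (cases "\<phi>A (real n)") auto
  qed
  have \<phi>n: "\<phi> (real n) \<le> ereal an" using conv_plus_le[of "real n" "real n" \<phi>A X] an unfolding \<phi>eq by simp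
  have Sbdd: "bdd_above S"
  proof (rule bdd_aboveI)
    fix c' assume "c' \<in> S"
    hence "ereal c' + ereal lam * ereal (real n - real d) \<le> \<phi> (real n)" unfolding S_def slope using deg by auto
    hence "ereal (c' + lam * (real n - real d)) \<le> ereal an" using \<phi>n by (metis order_trans plus_ereal.simps(1) times_ereal.simps(1))
    hence "c' + lam * (real n - real d) \<le> an" by simp
    thus "c' \<le> an - lam * (real n - real d)" by simp
  qed
  have cS: "ereal c + ereal lam * ereal (x - real d) \<le> \<phi> x" if x: "x \<in> {real d..real n}" for x
  proof (cases "\<phi> x")
    case (real v)
    have "c \<le> v - lam * (x - real d)" unfolding c_def
    proof (rule cSup_least)
      show "S \<noteq> {}" using S0 by blast
      fix c' assume "c' \<in> S"
      hence "ereal c' + ereal lam * ereal (x - real d) \<le> \<phi> x" unfolding S_def slope using x by auto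
      thus "c' \<le> v - lam * (x - real d)" using real by simp
    qed
    thus ?thesis using real by simp
  next
    case MInf thus ?thesis using \<phi>low[of x] by simp
  qed simp
  have delta: "nf_delta (real n) (real d) \<phi> \<psi> = ereal (c - vb)"
    unfolding nf_delta_def c_def S_def using \<psi>d by simp
  define Fp where "Fp = Fphi (real n) lam \<phi>"
  have qd: "Fp (j + d) - ereal vb \<le> val (coeff (P div B') j)" for j
  proof -
    have "Fp (j + degree B') - val (lead_coeff B') \<le> val (coeff (P div B') j)"
      unfolding Fp_def
    proof (rule div_bound[OF dv B'0 slopeB'])
      show "\<And>k. Fphi (real n) lam \<phi> k + ereal lam \<le> Fphi (real n) lam \<phi> (Suc k)" by (rule F1)
      fix k
      show "Fphi (real n) lam \<phi> k \<le> val (coeff P k)"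
      proof (rule F2)
        show "\<phi> (real k) \<le> val (coeff P k)" if "real k \<le> real n" for k
          using Pbound that by simp
        show "val (coeff P k) = \<infinity>" if "real n < real k" for k
          using that Pdeg dv_zero[OF dv] by simp
      qed
    qed
    thus ?thesis using leadB' degB' by simp
  qed
  have Fpc: "ereal (c + lam * real j) \<le> Fp (j + d)" for j
    using F3[of "real d" "real n" c lam \<phi> "j + d"] cS unfolding Fp_def by simp
  have eqs: "(A_app + \<delta>A) div (B_app + \<delta>B) - A_app div B_app = P div B'"
            "(A_app + \<delta>A) mod (B_app + \<delta>B) - A_app mod B_app = P mod B'"
    using divmod_pert[OF B0, of \<delta>B A_app \<delta>A] B'0 degB' unfolding B'_def P_def Qa_def d_def by auto
  have part1: "coeffs_ge val (n - d) (P div B') (nf_div (real n) (real d) \<phi> \<psi>)"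
    unfolding coeffs_ge_def
  proof (intro allI impI)
    fix i assume "i \<le> n - d"
    have "nf_div (real n) (real d) \<phi> \<psi> (real i) = Fp (i + d) - ereal vb"
      unfolding Fp_def using F4[OF slope] \<psi>d by simp
    thus "nf_div (real n) (real d) \<phi> \<psi> (real i) \<le> val (coeff (P div B') i)" using qd by simp
  qed
  have part2: "coeffs_ge val (d - 1) (P mod B') (nf_mod (real n) (real d) \<phi> \<psi>)"
    unfolding coeffs_ge_def
  proof (intro allI impI)
    fix i assume i: "i \<le> d - 1"
    have iin: "real i \<in> {0..real d - 1}" using i deg by auto
    have m1: "nf_mod (real n) (real d) \<phi> \<psi> (real i) \<le> \<phi> (real i)"
      and m2: "nf_mod (real n) (real d) \<phi> \<psi> (real i) \<le> \<psi> (real i) + ereal (c - vb)"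
      using conv_plus_le[OF iin, of \<phi> "\<lambda>x. \<psi> x + nf_delta (real n) (real d) \<phi> \<psi>"] delta
      unfolding nf_mod_def by auto
    define m where "m = nf_mod (real n) (real d) \<phi> \<psi> (real i)"
    have t1: "m \<le> val (coeff P i)" using m1 Pbound[of i] i deg unfolding m_def by (meson diff_le_self le_trans order_trans)
    have "m \<le> val (coeff (P div B') j * coeff B' (i - j))" if j: "j \<in> {..i}" for j
    proof -
      have ij: "i - j \<le> d" "i - j \<le> i" "i \<le> d" using i j deg by auto
      have a: "\<psi> (real i) \<le> \<psi> (real (i - j)) + ereal (lam * real j)"
        using L2[of "i - j" i] ij j by simp
      have b: "ereal (c + lam * real j - vb) \<le> val (coeff (P div B') j)"
      proof -
        have "ereal (c + lam * real j) - ereal vb \<le> Fp (j + d) - ereal vb"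
          using Fpc[of j] by (intro ereal_minus_mono) auto
        thus ?thesis using qd[of j] by simp
      qed
      have e: "\<psi> (real (i - j)) \<le> val (coeff B' (i - j))" using \<psi>B' ij by simp
      have "m \<le> \<psi> (real i) + ereal (c - vb)" using m2 unfolding m_def .
      also have "\<dots> \<le> \<psi> (real (i - j)) + ereal (lam * real j) + ereal (c - vb)" using a by (rule add_right_mono)
      also have "\<dots> = \<psi> (real (i - j)) + ereal (c + lam * real j - vb)"
        by (cases "\<psi> (real (i - j))") (auto simp: algebra_simps)
      also have "\<dots> \<le> val (coeff B' (i - j)) + val (coeff (P div B') j)" using e b by (rule add_mono)
      also have "\<dots> = val (coeff (P div B') j * coeff B' (i - j))" using dv_mult[OF dv] by (simp add: add.commute)
      finally show ?thesis .
    qed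
    hence t2: "m \<le> val (coeff (P div B' * B') i)" unfolding coeff_mult by (intro dv_sum_ge[OF dv]) auto
    have "P mod B' = P - P div B' * B'" by (simp add: minus_div_mult_eq_mod)
    hence "coeff (P mod B') i = coeff P i - coeff (P div B' * B') i" by simp
    thus "nf_mod (real n) (real d) \<phi> \<psi> (real i) \<le> val (coeff (P mod B') i)"
      using dv_diff_ge[OF dv t1 t2] unfolding m_def by simp
  qed
  show "coeffs_ge val (n - d) ((A_app + \<delta>A) div (B_app + \<delta>B) - A_app div B_app)
              (nf_div (real n) (real d) \<phi> (newton_fun val B_app)) \<and>
            coeffs_ge val (d - 1) ((A_app + \<delta>A) mod (B_app + \<delta>B) - A_app mod B_app)
              (nf_mod (real n) (real d) \<phi> (newton_fun val B_app))"
    using part1 part2 eqs unfolding \<psi>_def by simp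
qed


end
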